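(* Let $P^1(z) = \tfrac12 z(1+z)$, $P^2(z) = z(1+z)$, and let $U^2$ be an attracting petal of $P^2$ at its parabolic fixed point $0$ as described in the context. Let $V$ be an open subset of $\mathrm D(0,\tfrac13)$ and let $\varepsilon > 0$. Then there exists $m_0$ such that for every $m \ge m_0$ and every $z_0 \in (P^1)^{\circ m}(V)$, \[ \mathrm m\Big(V \cap (P^1)^{\circ -m}\big((\mathbb C \setminus U^2) + z_0\big)\Big) < \varepsilon. \]
   Context: $\mathrm m$ is two-dimensional Lebesgue measure, $\mathrm D(a,r)$ is the open disc of centre $a$ and radius $r$, $(P^1)^{\circ m}$ is the $m$-fold iterate and $(P^1)^{\circ -m}(X)$ denotes the full preimage of $X$ under it. For $X \subset \mathbb C$ and $z_0 \in \mathbb C$, $X + z_0 = \{z \in \mathbb C : z - z_0 \in X\}$. The polynomial $P^2$ has a parabolic fixed point at $0$ with multiplier $1$, with attracting direction the negative real axis and repelling direction the positive real axis. $U^2$ is an open attracting petal for $P^2$ at $0$: an open set with $0 \in \partial U^2$, $P^2(U^2) \subset U^2$, on which $P^2$ is conformally conjugate to $z \mapsto z+1$, and such that $\mathbb C \setminus U^2$ has a cusp at $0$ in the direction of the positive real axis, i.e. for every $\theta > 0$ there is $r > 0$ with $\mathrm D(0,r) \setminus U^2 \subset \{0\} \cup \{z \ne 0 : |\arg z| < \theta\}$. *)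

theory Defs
  imports "HOL-Analysis.Analysis"
begin

definition P1 :: "complex \<Rightarrow> complex" where
  "P1 z = (1/2) * z * (1 + z)"

definition P2 :: "complex \<Rightarrow> complex" where
  "P2 z = z * (1 + z)"

text \<open>Open attracting petal of P2 at the parabolic fixed point 0, as in the context:
  open, 0 on its boundary, forward invariant, P2 conformally conjugate on it to
  translation by 1, and the complement has a cusp at 0 along the positive real axis.\<close>
definition attracting_petal_P2 :: "complex set \<Rightarrow> bool" where
  "attracting_petal_P2 U \<longleftrightarrow>
     open U \<and> 0 \<in> frontier U \<and> P2 ` U \<subseteq> U \<and>
     (\<exists>\<phi>. \<phi> holomorphic_on U \<and> inj_on \<phi> U \<and> (\<forall>z\<in>U. \<phi> (P2 z) = \<phi> z + 1)) \<and>
     (\<forall>\<theta>>0. \<exists>r>0. ball 0 r - U \<subseteq> {0} \<union> {z. z \<noteq> 0 \<and> \<bar>Arg z\<bar> < \<theta>})"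

end

theory Submission
  imports Defs
begin

lemma P1_bound: "cmod z \<le> 1/3 \<Longrightarrow> cmod (P1 z) \<le> 2/3 * cmod z"
proof -
  assume a: "cmod z \<le> 1/3"
  have "cmod (P1 z) = cmod z * cmod (1+z) / 2" by (simp add: P1_def norm_mult)
  also have "\<dots> \<le> cmod z * (4/3) / 2"
    using a norm_triangle_ineq[of 1 z] by (intro divide_right_mono mult_left_mono) auto
  finally show ?thesis by simp
qed

lemma orb1: "cmod z \<le> 1/3 \<Longrightarrow> cmod ((P1^^k) z) \<le> (1/3) * (2/3)^k"
proof (induction k)
  case 0 then show ?case by simp
next
  case (Suc k)
  have "(2/3::real)^k \<le> 1" by (simp add: power_le_one)
  then have "cmod ((P1^^k) z) \<le> 1/3" using Suc by linarith
  then have "cmod ((P1^^Suc k) z) \<le> 2/3 * cmod ((P1^^k) z)" using P1_bound by simp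
  also have "\<dots> \<le> 2/3 * ((1/3) * (2/3)^k)" using Suc by simp
  finally show ?case by simp
qed

lemma orb2: "cmod z \<le> 1/3 \<Longrightarrow> 2^k * cmod ((P1^^k) z) \<le> (1/3) * exp (1 - (2/3)^k)"
proof (induction k)
  case 0 then show ?case by simp
next
  case (Suc k)
  let ?w = "(P1^^k) z"
  have w: "cmod ?w \<le> (1/3) * (2/3)^k" using orb1 Suc by blast
  have "cmod ((P1^^Suc k) z) = cmod ?w * cmod (1+?w) / 2" by (simp add: P1_def norm_mult)
  also have "\<dots> \<le> cmod ?w * (1 + (1/3)*(2/3)^k) / 2"
    using w norm_triangle_ineq[of 1 ?w] by (intro divide_right_mono mult_left_mono) auto
  finally have h: "cmod ((P1^^Suc k) z) \<le> cmod ?w * (1 + (1/3)*(2/3)^k) / 2" .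
  have "2^Suc k * cmod ((P1^^Suc k) z) \<le> 2^Suc k * (cmod ?w * (1 + (1/3)*(2/3)^k) / 2)"
    using h by (intro mult_left_mono) auto
  also have "\<dots> = (2^k * cmod ?w) * (1 + (1/3)*(2/3)^k)" by simp
  finally have "2^Suc k * cmod ((P1^^Suc k) z) \<le> (2^k * cmod ?w) * (1 + (1/3)*(2/3)^k)" .
  also have "\<dots> \<le> ((1/3) * exp (1 - (2/3)^k)) * exp ((1/3)*(2/3)^k)"
  proof (rule mult_mono)
    show "2^k * cmod ?w \<le> (1/3) * exp (1 - (2/3)^k)" using Suc.IH Suc.prems by blast
  qed (auto simp: add_pos_nonneg)
  also have "\<dots> = (1/3) * exp (1 - (2/3)^k + (1/3)*(2/3)^k)" unfolding exp_add by (simp add: mult.assoc)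
  also have "1 - (2/3)^k + (1/3)*(2/3)^k = 1 - (2/3::real)^Suc k" by simp
  finally show ?case .
qed

lemma orb3: "cmod z \<le> 1/3 \<Longrightarrow> cmod w \<le> 1/3 \<Longrightarrow>
   2^k * cmod ((P1^^k) z - (P1^^k) w) \<ge> exp (-6 + 6*(2/3)^k) * cmod (z - w)"
proof (induction k)
  case 0 then show ?case by simp
next
  case (Suc k)
  let ?a = "(P1^^k) z" and ?b = "(P1^^k) w"
  have a: "cmod ?a \<le> (1/3) * (2/3)^k" using orb1 Suc by blast
  have b: "cmod ?b \<le> (1/3) * (2/3)^k" using orb1 Suc by blast
  have eq: "(P1^^Suc k) z - (P1^^Suc k) w = (?a - ?b) * (1 + ?a + ?b) / 2"
    by (simp add: P1_def field_simps)
  have "cmod (1 + ?a + ?b) \<ge> 1 - cmod ?a - cmod ?b"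
  proof -
    have "cmod (1::complex) = cmod ((1 + ?a + ?b) - ?a - ?b)" by simp
    also have "\<dots> \<le> cmod ((1 + ?a + ?b) - ?a) + cmod ?b" by (rule norm_triangle_ineq4)
    also have "\<dots> \<le> cmod (1 + ?a + ?b) + cmod ?a + cmod ?b" using norm_triangle_ineq4[of "1 + ?a + ?b" ?a] by simp
    finally show ?thesis by simp
  qed
  then have c: "cmod (1 + ?a + ?b) \<ge> 1 - (2/3)^Suc k" using a b by simp
  have x: "(2/3::real)^Suc k \<le> 2/3" by (simp add: power_le_one)
  have "exp (-3 * (2/3)^Suc k) \<le> 1 - (2/3::real)^Suc k"
  proof -
    let ?x = "(2/3::real)^Suc k"
    have aux: "\<And>x::real. (1+3*x)*(1-x) = 1 + x*(2-3*x)" by (simp add: algebra_simps)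
    have "0 \<le> ?x * (2 - 3*?x)" using x by (intro mult_nonneg_nonneg) auto
    moreover have "(1 + 3*?x) * (1 - ?x) = 1 + ?x * (2 - 3*?x)" by (rule aux)
    ultimately have "1 \<le> (1 + 3*?x) * (1 - ?x)" by linarith
    also have "\<dots> \<le> exp (3*?x) * (1 - ?x)" using x by (intro mult_right_mono) (auto simp: exp_ge_add_one_self)
    finally have "1 \<le> exp (3*?x) * (1 - ?x)" .
    then show ?thesis by (simp add: exp_minus field_simps)
  qed
  then have c2: "cmod (1 + ?a + ?b) \<ge> exp (-3 * (2/3)^Suc k)" using c by linarith
  have e1: "2^Suc k * cmod ((P1^^Suc k) z - (P1^^Suc k) w) = (2^k * cmod (?a - ?b)) * cmod (1 + ?a + ?b)"
    unfolding eq by (simp add: norm_mult norm_divide)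
  have e2: "(2^k * cmod (?a - ?b)) * cmod (1 + ?a + ?b) \<ge> (exp (-6 + 6*(2/3)^k) * cmod (z - w)) * exp (-3 * (2/3)^Suc k)"
  proof (rule mult_mono)
    show "exp (-6 + 6*(2/3)^k) * cmod (z - w) \<le> 2^k * cmod (?a - ?b)" using Suc.IH Suc.prems by blast
  qed (use c2 in auto)
  have e3: "(exp (-6 + 6*(2/3)^k) * cmod (z - w)) * exp (-3 * (2/3)^Suc k) = exp (-6 + 6*(2/3)^k + -3 * (2/3)^Suc k) * cmod (z - w)"
    unfolding exp_add by (simp add: mult_ac)
  have e4: "-6 + 6*(2/3)^k + -3 * (2/3)^Suc k = -6 + 6*(2/3::real)^Suc k" by simp
  have "exp (-6 + 6*(2/3)^Suc k) * cmod (z - w) = exp (-6 + 6*(2/3)^k + -3 * (2/3)^Suc k) * cmod (z - w)"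
    by (simp only: e4)
  also have "\<dots> = (exp (-6 + 6*(2/3)^k) * cmod (z - w)) * exp (-3 * (2/3)^Suc k)" by (rule e3[symmetric])
  also have "\<dots> \<le> (2^k * cmod (?a - ?b)) * cmod (1 + ?a + ?b)" by (rule e2)
  also have "\<dots> = 2^Suc k * cmod ((P1^^Suc k) z - (P1^^Suc k) w)" by (rule e1[symmetric])
  finally show ?case .
qed

lemma fbound: "cmod w \<le> 1/3 \<Longrightarrow> 2^m * cmod ((P1^^m) w) < 1"
proof -
  assume w: "cmod w \<le> 1/3"
  have "2^m * cmod ((P1^^m) w) \<le> (1/3) * exp (1 - (2/3)^m)" using orb2[OF w] .
  also have "exp (1 - (2/3::real)^m) \<le> exp 1" by simp
  then have "(1/3) * exp (1 - (2/3::real)^m) \<le> (1/3) * exp 1" by simp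
  also have "(1/3) * exp (1::real) < 1" using e_less_272 by simp
  finally show ?thesis by simp
qed

lemma fdiff: "cmod z \<le> 1/3 \<Longrightarrow> cmod w \<le> 1/3 \<Longrightarrow>
   cmod (z - w) \<le> exp 6 * (2^m * cmod ((P1^^m) z - (P1^^m) w))"
proof -
  assume z: "cmod z \<le> 1/3" and w: "cmod w \<le> 1/3"
  have "exp (-6) * cmod (z - w) \<le> exp (-6 + 6*(2/3)^m) * cmod (z - w)" by (intro mult_right_mono) auto
  also have "\<dots> \<le> 2^m * cmod ((P1^^m) z - (P1^^m) w)" using orb3[OF z w] .
  finally have "exp (-6) * cmod (z - w) \<le> 2^m * cmod ((P1^^m) z - (P1^^m) w)" .
  then have "exp 6 * (exp (-6) * cmod (z - w)) \<le> exp 6 * (2^m * cmod ((P1^^m) z - (P1^^m) w))" by simp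
  moreover have "exp 6 * (exp (-6) * cmod (z - w)) = cmod (z - w)"
    by (simp add: mult.assoc[symmetric] exp_add[symmetric])
  ultimately show ?thesis by simp
qed

lemma cball_meas: "0 \<le> \<rho> \<Longrightarrow> emeasure lborel (cball (p::complex) \<rho>) \<le> ennreal ((2*\<rho>)^2)"
proof -
  assume r: "0 \<le> \<rho>"
  let ?d = "Complex \<rho> \<rho>"
  have "cball p \<rho> \<subseteq> cbox (p - ?d) (p + ?d)"
  proof
    fix x assume "x \<in> cball p \<rho>"
    then have "cmod (x - p) \<le> \<rho>" by (simp add: dist_norm norm_minus_commute)
    then have "\<bar>Re (x - p)\<bar> \<le> \<rho>" "\<bar>Im (x - p)\<bar> \<le> \<rho>"
      using abs_Re_le_cmod abs_Im_le_cmod order_trans by blast+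
    then show "x \<in> cbox (p - ?d) (p + ?d)"
      by (auto simp: mem_box Basis_complex_def)
  qed
  then have "emeasure lborel (cball p \<rho>) \<le> emeasure lborel (cbox (p - ?d) (p + ?d))"
    by (intro emeasure_mono) auto
  also have "\<dots> = ennreal ((2*\<rho>)^2)"
    using r by (simp add: emeasure_lborel_cbox_eq Basis_complex_def power2_eq_square)
  finally show ?thesis .
qed

theorem lemma2p2:
  fixes U2 V :: "complex set" and \<epsilon> :: real
  assumes "attracting_petal_P2 U2"
    and "open V" and "V \<subseteq> ball 0 (1/3)"
    and "\<epsilon> > 0"
  shows "\<exists>m0::nat. \<forall>m\<ge>m0. \<forall>z0 \<in> (P1 ^^ m) ` V.
           emeasure lborel (V \<inter> (P1 ^^ m) -` {z. z - z0 \<in> - U2}) < ennreal \<epsilon>"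
proof -
  have petal: "\<forall>\<theta>>0. \<exists>r>0. ball 0 r - U2 \<subseteq> {0} \<union> {z. z \<noteq> 0 \<and> \<bar>Arg z\<bar> < \<theta>}"
    using assms(1) unfolding attracting_petal_P2_def by blast
  define E where "E = exp (6::real)"
  have E0: "E > 0" unfolding E_def by simp
  define s where "s = min 1 (\<epsilon> / (2000 * E^2))"
  have s0: "0 < s" "s \<le> 1" "s \<le> \<epsilon> / (2000 * E^2)"
    unfolding s_def using assms(4) E0 by auto
  obtain r where r: "r > 0" "ball 0 r - U2 \<subseteq> {0} \<union> {z. z \<noteq> 0 \<and> \<bar>Arg z\<bar> < s}"
    using petal s0 by blast
  obtain m0 where m0: "(1/2::real)^m0 < r/2" using real_arch_pow_inv[of "r/2" "1/2"] r by auto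
  define n where "n = nat \<lceil>1/s\<rceil>"
  have c1: "1 \<le> 1/s" using s0 by simp
  have rn: "real n = of_int \<lceil>1/s\<rceil>" unfolding n_def using c1 by simp
  have n12: "1/s \<le> real n" "real n \<le> 1/s + 1" unfolding rn
    using le_of_int_ceiling[of "1/s"] of_int_ceiling_le_add_one[of "1/s"] by auto
  have n: "1/s \<le> real n" "real n \<le> 1/s + 1" "n \<ge> 1" using n12 c1 by auto
  define \<rho> where "\<rho> = 8 * E * s"
  have \<rho>0: "\<rho> \<ge> 0" unfolding \<rho>_def using E0 s0 by simp
  have inV: "\<And>w. w \<in> V \<Longrightarrow> cmod w \<le> 1/3" using assms(3) by (force simp: dist_norm)
  show ?thesis
  proof (intro exI allI impI ballI)
    fix m z0 assume m: "m0 \<le> m" and z0: "z0 \<in> (P1^^m) ` V"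
    define f where "f = P1^^m"
    obtain w0 where w0: "w0 \<in> V" "z0 = f w0" using z0 unfolding f_def by blast
    define M where "M = (2::real)^m"
    define R where "R = 2 / M"
    have M: "M > 0" unfolding M_def by simp
    have R0: "R > 0" unfolding R_def using M by simp
    have "R = 2 * (1/2)^m" unfolding R_def M_def by (simp add: power_divide)
    also have "\<dots> \<le> 2 * (1/2)^m0" using m by (intro mult_left_mono power_decreasing) auto
    also have "\<dots> < r" using m0 by simp
    finally have Rr: "R < r" .
    have fb: "cmod (f w) < 1/M" if "w \<in> V" for w
      using fbound[OF inV[OF that], of m] M unfolding f_def M_def by (simp add: field_simps)
    have fd: "cmod (w - w') \<le> E * (M * cmod (f w - f w'))" if "w \<in> V" "w' \<in> V" for w w'
      using fdiff[OF inV[OF that(1)] inV[OF that(2)], of m] unfolding f_def M_def E_def .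
    define c where "c j = z0 + of_real (real_of_int j * R / real n)" for j :: int
    define B where "B j = {w \<in> V. f w \<in> ball (c j) (2 * s * R)}" for j
    have cover: "V \<inter> (P1 ^^ m) -` {z. z - z0 \<in> - U2} \<subseteq> (\<Union>j\<in>{-int n..int n}. B j)"
    proof
      fix w assume "w \<in> V \<inter> (P1 ^^ m) -` {z. z - z0 \<in> - U2}"
      then have w: "w \<in> V" "f w - z0 \<notin> U2" unfolding f_def by auto
      define u where "u = f w - z0"
      have "cmod u \<le> cmod (f w) + cmod z0" unfolding u_def by (rule norm_triangle_ineq4)
      also have "\<dots> < 1/M + 1/M" using fb[OF w(1)] fb[OF w0(1)] w0(2) by simp
      finally have uR: "cmod u < R" unfolding R_def by simp
      then have "u \<in> ball 0 r - U2" using Rr w(2) unfolding u_def by simp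
      then have "u = 0 \<or> \<bar>Arg u\<bar> < s" using r(2) by blast
      have Imu: "\<bar>Im u\<bar> \<le> s * cmod u"
      proof (cases "u = 0")
        case True then show ?thesis by simp
      next
        case False
        then have a: "\<bar>Arg u\<bar> < s" using \<open>u = 0 \<or> \<bar>Arg u\<bar> < s\<close> by blast
        from Arg_eq[OF False] have "Im u = Im (of_real (cmod u) * exp (\<i> * of_real (Arg u)))"
          by (rule arg_cong)
        also have "\<dots> = cmod u * sin (Arg u)" by (simp add: Im_exp)
        finally have "\<bar>Im u\<bar> = cmod u * \<bar>sin (Arg u)\<bar>" by (simp add: abs_mult)
        also have "\<dots> \<le> cmod u * s"
          using abs_sin_x_le_abs_x[of "Arg u"] a by (intro mult_left_mono) auto
        finally show ?thesis by (simp add: mult.commute)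
      qed
      have Reu: "\<bar>Re u\<bar> < R" using abs_Re_le_cmod[of u] uR by linarith
      define x where "x = Re u * real n / R"
      define j where "j = \<lfloor>x\<rfloor>"
      have n0: "real n > 0" using n(3) by simp
      have "- R < Re u" "Re u < R" using Reu by auto
      then have "- R * real n < Re u * real n" "Re u * real n < R * real n"
        using n0 mult_strict_right_mono[of "- R" "Re u" "real n"] mult_strict_right_mono[of "Re u" R "real n"] by auto
      then have xb: "- real n < x" "x < real n"
        unfolding x_def using R0 by (auto simp: pos_less_divide_eq pos_divide_less_eq mult.commute)
      have j1: "real_of_int j \<le> x" "x < real_of_int j + 1" unfolding j_def by linarith+
      have jr: "j \<in> {-int n..int n}" using xb j1 by auto
      have "real_of_int j * R / real n \<le> Re u" "Re u < (real_of_int j + 1) * R / real n"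
        using j1 R0 n(3) unfolding x_def by (auto simp: field_simps)
      moreover have "(real_of_int j + 1) * R / real n = real_of_int j * R / real n + R / real n"
        by (simp add: add_divide_distrib distrib_right)
      ultimately have d1: "\<bar>Re u - real_of_int j * R / real n\<bar> < R / real n"
        using R0 by (simp add: abs_if)
      have "R / real n \<le> s * R"
      proof -
        have "1 / real n \<le> s" using n(1) s0(1) n(3) by (simp add: field_simps)
        then have "R * (1 / real n) \<le> R * s" using R0 by (intro mult_left_mono) auto
        then show ?thesis by (simp add: mult.commute)
      qed
      have "cmod (f w - c j) = cmod (u - of_real (real_of_int j * R / real n))"
        unfolding c_def u_def by (simp add: algebra_simps)
      also have "\<dots> \<le> \<bar>Re u - real_of_int j * R / real n\<bar> + \<bar>Im u\<bar>"
        using cmod_le[of "u - of_real (real_of_int j * R / real n)"] by simp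
      also have "\<dots> < s * R + s * R"
      proof -
        have "s * cmod u \<le> s * R" using uR s0(1) by (intro mult_left_mono) auto
        then show ?thesis using d1 \<open>R / real n \<le> s * R\<close> Imu by linarith
      qed
      finally have "f w \<in> ball (c j) (2 * s * R)" by (simp add: dist_norm norm_minus_commute mult_ac)
      then show "w \<in> (\<Union>j\<in>{-int n..int n}. B j)" using jr w(1) unfolding B_def by blast
    qed
    have "\<exists>p. B j \<subseteq> cball p \<rho>" for j
    proof (cases "B j = {}")
      case True then show ?thesis by blast
    next
      case False
      then obtain q where q: "q \<in> B j" by blast
      have "B j \<subseteq> cball q \<rho>"
      proof
        fix w assume w: "w \<in> B j"
        have "cmod (f w - f q) \<le> dist (f w) (c j) + dist (c j) (f q)"
          using dist_triangle[of "f w" "f q" "c j"] by (simp add: dist_norm)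
        also have "\<dots> < 2 * s * R + 2 * s * R"
        proof -
          have "dist (c j) (f w) < 2 * s * R" "dist (c j) (f q) < 2 * s * R" using w q unfolding B_def by auto
          moreover have "dist (f w) (c j) = dist (c j) (f w)" by (rule dist_commute)
          ultimately show ?thesis by linarith
        qed
        finally have "cmod (f w - f q) \<le> 4 * s * R" by (simp add: mult_ac)
        then have "M * cmod (f w - f q) \<le> M * (4 * s * R)" using M by (intro mult_left_mono) auto
        also have "M * (4 * s * R) = 8 * s" unfolding R_def using M by simp
        finally have "E * (M * cmod (f w - f q)) \<le> E * (8 * s)" using E0 by simp
        then have "cmod (w - q) \<le> \<rho>" using fd[of w q] w q unfolding B_def \<rho>_def by auto
        then show "w \<in> cball q \<rho>" by (simp add: dist_norm norm_minus_commute)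
      qed
      then show ?thesis by blast
    qed
    then obtain p where p: "\<And>j. B j \<subseteq> cball (p j) \<rho>" by metis
    have "emeasure lborel (V \<inter> (P1 ^^ m) -` {z. z - z0 \<in> - U2})
        \<le> emeasure lborel (\<Union>j\<in>{-int n..int n}. cball (p j) \<rho>)"
    proof (rule emeasure_mono)
      show "V \<inter> (P1 ^^ m) -` {z. z - z0 \<in> - U2} \<subseteq> (\<Union>j\<in>{-int n..int n}. cball (p j) \<rho>)"
        using cover p by blast
    qed auto
    also have "\<dots> \<le> (\<Sum>j\<in>{-int n..int n}. emeasure lborel (cball (p j) \<rho>))"
      by (rule emeasure_subadditive_finite) auto
    also have "\<dots> \<le> (\<Sum>j\<in>{-int n..int n}. ennreal ((2*\<rho>)^2))"
      by (intro sum_mono cball_meas \<rho>0)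
    also have "\<dots> = ennreal (\<Sum>j\<in>{-int n..int n}. (2*\<rho>)^2)" by (rule sum_ennreal) simp
    also have "(\<Sum>j\<in>{-int n..int n}. (2*\<rho>)^2) = (2 * real n + 1) * (2*\<rho>)^2"
    proof -
      have "card {-int n..int n} = 2 * n + 1" by simp
      then show ?thesis by simp
    qed
    also have "(2 * real n + 1) * (2*\<rho>)^2 < \<epsilon>"
    proof -
      have "2 * real n + 1 \<le> 5 / s" using n(2) s0(1,2) by (simp add: field_simps)
      then have "(2 * real n + 1) * (2*\<rho>)^2 \<le> (5 / s) * (2*\<rho>)^2" by (intro mult_right_mono) auto
      also have "\<dots> = 1280 * E^2 * s" unfolding \<rho>_def using s0(1) by (simp add: field_simps power2_eq_square)
      also have "\<dots> \<le> 1280 * E^2 * (\<epsilon> / (2000 * E^2))" using s0(3) E0 by (intro mult_left_mono) auto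
      also have "\<dots> < \<epsilon>" using E0 assms(4) by (simp add: field_simps)
      finally show ?thesis .
    qed
    then have "ennreal ((2 * real n + 1) * (2*\<rho>)^2) < ennreal \<epsilon>"
      using assms(4) by (simp add: ennreal_lessI)
    finally show "emeasure lborel (V \<inter> (P1 ^^ m) -` {z. z - z0 \<in> - U2}) < ennreal \<epsilon>" .
  qed
qed

end
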